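(* Let $(X,d,\mu)$ be a metric measure space satisfying $\mathrm{BG}(k,n)$ with constant $C$ for some $k\in\mathbb{R}$, $n\ge1$, $1\le C<\sqrt2$, let $R>0$ and let $\delta=\delta(k,n,C,R)>0$ be the constant such that for every $r$-cut point $x$ with $0<r\le R$ and every connected component $O$ of $\overline B_r(x)\setminus\{x\}$ one has $\mathrm{diam}(O\cap S_r(x))\le(2-\delta)r$. Let $x_1,x_2,x_3\in X$ be $r$-cut points with $0<r\le R$ (each has degree $2$), labeled so that $x_2,x_3$ lie in the same connected component $O_1'$ of $\overline B_r(x_1)\setminus\{x_1\}$ and $d(x_1,x_2)<d(x_1,x_3)$. For $i=2,3$ let $O_i$ be the connected component of $\overline B_r(x_i)\setminus\{x_i\}$ containing $x_1$ and $O_i'$ the other component. If $d(x_i,x_j)<\delta r/6$ for all $1\le i,j\le3$, then $O_2'\cap O_3'\ne\emptyset$ (that is, $\{x_1,x_2,x_3\}$ stands in a line).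
   Context: A metric measure space $(X,d,\mu)$ means a complete, locally compact length space $(X,d)$ equipped with a Borel measure $\mu$. $B_r(x)$ and $\overline B_r(x)$ denote the open and closed balls of radius $r$ about $x$, and $S_r(x)=\{y: d(x,y)=r\}$. For $k\in\mathbb{R}$ let $\mathsf s_k(t)=\sin(\sqrt{k}\,t)/\sqrt{k}$ if $k>0$, $\mathsf s_k(t)=t$ if $k=0$, $\mathsf s_k(t)=\sinh(\sqrt{-k}\,t)/\sqrt{-k}$ if $k<0$. For real $n\ge1$ and $0\le r_1<r_2$ set $V_{k,n}(r_1,r_2)=\alpha_{n-1}\int_{r_1}^{r_2}\mathsf s_k(t)^{n-1}\,dt$ with $\alpha_{n-1}=2\pi^{n/2}/\Gamma(n/2)$. For $x\in X$ let $A_{r_1,r_2}(x)=B_{r_2}(x)\setminus\overline B_{r_1}(x)$ and $A_{0,r}(x)=B_r(x)$. For a measurable $U\subset A_{r_1,r_2}(x)$ and $0\le s_1<s_2$ with $s_1\le r_1$, $s_2\le r_2$, let $S_{s_1,s_2}(x,U)=\{y\in A_{s_1,s_2}(x): d(x,y)+d(y,z)=d(x,z)\text{ for some }z\in U\}$. $(X,d,\mu)$ satisfies $\mathrm{BG}(k,n)$ with constant $C\ge1$ if for every $x\in X$, all $0\le r_1<r_2$, $0\le s_1<s_2$ with $s_1\le r_1$, $s_2\le r_2$, and every measurable $U\subset A_{r_1,r_2}(x)$, one has $\mu(U)/\mu(S_{s_1,s_2}(x,U))\le C\,V_{k,n}(r_1,r_2)/V_{k,n}(s_1,s_2)$. The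 degree $\deg(x)$ is the supremum, over all connected neighborhoods $U$ of $x$, of the number of connected components of $U\setminus\{x\}$. For $r>0$, a point $x$ is an $r$-cut point if: (i) $\overline B_r(x)\setminus\{x\}$ is disconnected; (ii) the number of connected components of $\overline B_r(x)\setminus\{x\}$ equals $\deg(x)$; (iii) $O\cap S_r(x)\ne\emptyset$ for every connected component $O$ of $\overline B_r(x)\setminus\{x\}$. *)

theory Defs
  imports "HOL-Analysis.Analysis" "HOL-Library.Extended_Nat"
begin

definition curve_length_le :: "(real \<Rightarrow> 'a::metric_space) \<Rightarrow> real \<Rightarrow> bool" where
  "curve_length_le \<gamma> L \<longleftrightarrow>
     (\<forall>(m::nat) (t::nat \<Rightarrow> real). 0 \<le> t 0 \<and> t m \<le> 1 \<and> (\<forall>i<m. t i \<le> t (Suc i)) \<longrightarrow>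
        (\<Sum>i<m. dist (\<gamma> (t i)) (\<gamma> (t (Suc i)))) \<le> L)"

definition length_space :: "'a::metric_space itself \<Rightarrow> bool" where
  "length_space _ \<longleftrightarrow>
     (\<forall>(x::'a) y \<epsilon>. \<epsilon> > 0 \<longrightarrow>
        (\<exists>\<gamma>. continuous_on {0..1} \<gamma> \<and> \<gamma> 0 = x \<and> \<gamma> 1 = y \<and> curve_length_le \<gamma> (dist x y + \<epsilon>)))"

definition mms :: "'a::metric_space measure \<Rightarrow> bool" where
  "mms \<mu> \<longleftrightarrow> complete (UNIV::'a set) \<and> locally compact (UNIV::'a set)
              \<and> length_space TYPE('a) \<and> sets \<mu> = sets borel"

definition sk :: "real \<Rightarrow> real \<Rightarrow> real" where
  "sk k t = (if k > 0 then sin (sqrt k * t) / sqrt k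
             else if k = 0 then t else sinh (sqrt (-k) * t) / sqrt (-k))"

definition alpha :: "real \<Rightarrow> real" where
  "alpha m = 2 * pi powr ((m + 1) / 2) / Gamma ((m + 1) / 2)"

definition Vkn :: "real \<Rightarrow> real \<Rightarrow> real \<Rightarrow> real \<Rightarrow> real" where
  "Vkn k n r1 r2 = alpha (n - 1) *
     integral {r1..r2} (\<lambda>t. if sk k t > 0 then sk k t powr (n - 1) else 0)"

definition annulus :: "'a::metric_space \<Rightarrow> real \<Rightarrow> real \<Rightarrow> 'a set" where
  "annulus x r1 r2 = (if r1 = 0 then ball x r2 else ball x r2 - cball x r1)"

definition Sset :: "'a::metric_space \<Rightarrow> real \<Rightarrow> real \<Rightarrow> 'a set \<Rightarrow> 'a set" where
  "Sset x s1 s2 U = {y \<in> annulus x s1 s2. \<exists>z\<in>U. dist x y + dist y z = dist x z}"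

definition BG :: "real \<Rightarrow> real \<Rightarrow> real \<Rightarrow> 'a::metric_space measure \<Rightarrow> bool" where
  "BG k n C \<mu> \<longleftrightarrow> C \<ge> 1 \<and>
     (\<forall>x r1 r2 s1 s2 U. 0 \<le> r1 \<and> r1 < r2 \<and> 0 \<le> s1 \<and> s1 < s2 \<and> s1 \<le> r1 \<and> s2 \<le> r2
        \<and> U \<in> sets \<mu> \<and> U \<subseteq> annulus x r1 r2 \<longrightarrow>
        emeasure \<mu> U / emeasure \<mu> (Sset x s1 s2 U)
          \<le> ennreal (C * Vkn k n r1 r2 / Vkn k n s1 s2))"

definition ncomp :: "'a::topological_space set \<Rightarrow> enat" where
  "ncomp S = (if finite (components S) then enat (card (components S)) else \<infinity>)"

definition deg :: "'a::topological_space \<Rightarrow> enat" where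
  "deg x = (SUP U \<in> {U. connected U \<and> (\<exists>V. open V \<and> x \<in> V \<and> V \<subseteq> U)}. ncomp (U - {x}))"

definition cut_point :: "real \<Rightarrow> 'a::metric_space \<Rightarrow> bool" where
  "cut_point r x \<longleftrightarrow>
     \<not> connected (cball x r - {x}) \<and>
     ncomp (cball x r - {x}) = deg x \<and>
     (\<forall>W\<in>components (cball x r - {x}). W \<inter> sphere x r \<noteq> {})"

end

theory Submission
  imports Defs
begin

lemma length_curve:
  fixes x y :: "'a::metric_space"
  assumes "length_space TYPE('a)" "\<eta> > 0"
  obtains \<gamma> :: "real \<Rightarrow> 'a" where "continuous_on {0..1} \<gamma>" "\<gamma> 0 = x" "\<gamma> 1 = y"
    "\<And>t. t \<in> {0..1} \<Longrightarrow> dist x (\<gamma> t) + dist (\<gamma> t) y \<le> dist x y + \<eta>"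
proof -
  obtain \<gamma> where g: "continuous_on {0..1} \<gamma>" "\<gamma> 0 = x" "\<gamma> 1 = y"
     "curve_length_le \<gamma> (dist x y + \<eta>)"
    using assms unfolding length_space_def by blast
  have *: "dist x (\<gamma> t) + dist (\<gamma> t) y \<le> dist x y + \<eta>" if "t \<in> {0..1}" for t
  proof -
    define tt where "tt = (\<lambda>i::nat. if i = 0 then 0 else if i = 1 then t else (1::real))"
    have "(\<Sum>i<2. dist (\<gamma> (tt i)) (\<gamma> (tt (Suc i)))) \<le> dist x y + \<eta>"
      using g(4) that unfolding curve_length_le_def
      apply (elim allE[of _ 2] allE[of _ tt])
      apply (auto simp: tt_def less_2_cases_iff)
      done
    then show ?thesis using g by (simp add: tt_def numeral_2_eq_2)
  qed
  show ?thesis using that[of \<gamma>] g * by blast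
qed

lemma curve_set:
  fixes x y :: "'a::metric_space"
  assumes "length_space TYPE('a)" "\<eta> > 0"
  shows "\<exists>T. connected T \<and> x \<in> T \<and> y \<in> T \<and> (\<forall>z\<in>T. dist x z + dist z y \<le> dist x y + \<eta>)"
proof -
  obtain \<gamma> :: "real \<Rightarrow> 'a" where g: "continuous_on {0..1} \<gamma>" "\<gamma> 0 = x" "\<gamma> 1 = y"
    "\<And>t. t \<in> {0..1} \<Longrightarrow> dist x (\<gamma> t) + dist (\<gamma> t) y \<le> dist x y + \<eta>"
    using length_curve[OF assms] by blast
  have "connected (\<gamma> ` {0..1})"
    using g(1) connected_Icc connected_continuous_image by blast
  moreover have "x \<in> \<gamma> ` {0..1}" "y \<in> \<gamma> ` {0..1}"
    using g(2,3) by force+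
  ultimately show ?thesis using g(4) by blast
qed

lemma approx_point:
  fixes x y :: "'a::metric_space"
  assumes LS: "length_space TYPE('a)" and s: "0 \<le> s" "s \<le> dist x y" and e: "\<eta> > 0"
  shows "\<exists>z. dist x z \<le> s \<and> dist z y \<le> dist x y - s + \<eta>"
proof (cases "s = 0")
  case True
  then show ?thesis using e by (intro exI[of _ x]) auto
next
  case False
  define \<eta>' where "\<eta>' = min \<eta> s"
  have e': "\<eta>' > 0" "\<eta>' \<le> s" "\<eta>' \<le> \<eta>" using False s e by (auto simp: \<eta>'_def)
  obtain \<gamma> :: "real \<Rightarrow> 'a" where g: "continuous_on {0..1} \<gamma>" "\<gamma> 0 = x" "\<gamma> 1 = y"
    "\<And>t. t \<in> {0..1} \<Longrightarrow> dist x (\<gamma> t) + dist (\<gamma> t) y \<le> dist x y + \<eta>'"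
    using length_curve[OF LS e'(1)] by blast
  have c: "continuous_on {0..1} (\<lambda>t. dist (\<gamma> t) y)"
    by (intro continuous_intros g(1))
  obtain t where t: "0 \<le> t" "t \<le> 1" "dist (\<gamma> t) y = dist x y - s + \<eta>'"
    using IVT2'[of "\<lambda>t. dist (\<gamma> t) y" 1 "dist x y - s + \<eta>'" 0, OF _ _ _ c] g(2,3) e' s
    by auto
  have "dist x (\<gamma> t) \<le> s" using g(4)[of t] t by auto
  then show ?thesis using t e' by (intro exI[of _ "\<gamma> t"]) auto
qed

lemma ball_connected_ls:
  fixes x :: "'a::metric_space"
  assumes LS: "length_space TYPE('a)"
  shows "connected (ball x s)"
proof -
  have "connected_component (ball x s) x y" if "y \<in> ball x s" for y
  proof -
    have "(s - dist x y)/2 > 0" using that by auto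
    then obtain T where T: "connected T" "x \<in> T" "y \<in> T"
      "\<forall>z\<in>T. dist x z + dist z y \<le> dist x y + (s - dist x y)/2"
      using curve_set[OF LS] by blast
    have "T \<subseteq> ball x s"
    proof
      fix z assume "z \<in> T"
      then have "dist x z + dist z y \<le> dist x y + (s - dist x y)/2" using T by auto
      moreover have "dist x y < s" using that by auto
      ultimately have "dist x z < s" using zero_le_dist[of z y] by argo
      then show "z \<in> ball x s" by simp
    qed
    then show ?thesis unfolding connected_component_def using T by blast
  qed
  then have "ball x s = connected_component_set (ball x s) x"
    using connected_component_subset by blast
  then show ?thesis by (metis connected_connected_component)
qed

lemma cball_connected_ls:
  fixes x :: "'a::metric_space"
  assumes LS: "length_space TYPE('a)"
  shows "connected (cball x s)"
proof (cases "s > 0")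
  case False
  then have "cball x s = {} \<or> cball x s = {x}"
    by (cases "s = 0") auto
  then show ?thesis by auto
next
  case True
  have "cball x s \<subseteq> closure (ball x s)"
  proof
    fix y assume y: "y \<in> cball x s"
    show "y \<in> closure (ball x s)"
      unfolding closure_approachable
    proof (intro allI impI)
      fix e :: real assume e: "e > 0"
      show "\<exists>z\<in>ball x s. dist z y < e"
      proof (cases "dist x y < s")
        case True then show ?thesis using e by (intro bexI[of _ y]) auto
      next
        case False
        then have dxy: "dist x y = s" using y by auto
        define m where "m = min s e"
        have m: "m > 0" "m \<le> s" "m \<le> e" using e True by (auto simp: m_def)
        obtain z where z: "dist x z \<le> s - m/2" "dist z y \<le> dist x y - (s - m/2) + m/4"
          using approx_point[OF LS, of "s - m/2" x y "m/4"] m dxy by auto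
        show ?thesis using z m dxy by (intro bexI[of _ z]) auto
      qed
    qed
  qed
  then show ?thesis
    using connected_intermediate_closure[OF ball_connected_ls[OF LS], of x s "cball x s"] by auto
qed

lemma loc_compact_cball:
  fixes y :: "'a::metric_space"
  assumes LC: "locally compact (UNIV::'a set)"
  shows "\<exists>e>0. compact (cball y e)"
proof -
  have "\<exists>u v. y \<in> u \<and> u \<subseteq> v \<and> v \<subseteq> UNIV \<and> openin (top_of_set UNIV) u \<and> compact v"
    using LC unfolding locally_compact by (rule bspec) simp
  then obtain u v where uv: "y \<in> u" "u \<subseteq> v" "openin (top_of_set UNIV) u" "compact v"
    by blast
  have "open u" using uv(3) by simp
  then obtain e where e: "e > 0" "cball y e \<subseteq> u"
    using uv(1) open_contains_cball by blast
  have "cball y e = v \<inter> cball y e" using e uv(2) by blast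
  then have "compact (cball y e)" using compact_Int_closed[OF uv(4) closed_cball[of y e]] by metis
  then show ?thesis using e by blast
qed

lemma compact_cball_ls:
  fixes x :: "'a::metric_space"
  assumes CO: "complete (UNIV::'a set)" and LC: "locally compact (UNIV::'a set)"
    and LS: "length_space TYPE('a)"
  shows "compact (cball x s)"
proof (rule ccontr)
  assume ns: "\<not> compact (cball x s)"
  define M where "M = {t. compact (cball x t)}"
  have down: "t \<in> M" if "t \<le> t'" "t' \<in> M" for t t'
  proof -
    have "cball x t = cball x t' \<inter> cball x t" using that by auto
    then show ?thesis using that compact_Int_closed[of "cball x t'" "cball x t"] by (simp add: M_def)
  qed
  have bdd: "bdd_above M"
  proof (rule bdd_aboveI)
    fix t assume "t \<in> M"
    show "t \<le> s"
    proof (rule ccontr)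
      assume "\<not> t \<le> s"
      then have "s \<in> M" using down[of s t] \<open>t \<in> M\<close> by auto
      then show False using ns by (simp add: M_def)
    qed
  qed
  obtain e0 where e0: "e0 > 0" "compact (cball x e0)" using loc_compact_cball[OF LC] by blast
  have e0M: "e0 \<in> M" using e0 by (simp add: M_def)
  define \<rho> where "\<rho> = Sup M"
  have rho_ge: "t \<le> \<rho>" if "t \<in> M" for t using cSup_upper[OF that bdd] by (simp add: \<rho>_def)
  have rho_pos: "\<rho> > 0" using rho_ge[OF e0M] e0 by auto
  have below: "t \<in> M" if tr: "t < \<rho>" for t
  proof -
    obtain m where "m \<in> M" "t < m" using less_cSupD[of M t] tr e0M unfolding \<rho>_def by blast
    then show ?thesis using down[of t m] by auto
  qed
  have comp_rho: "compact (cball x \<rho>)"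
    unfolding compact_eq_totally_bounded
  proof (intro conjI allI impI)
    show "complete (cball x \<rho>)"
      using complete_closed_subset[OF closed_cball _ CO] by blast
  next
    fix e :: real assume e: "e > 0"
    define s0 where "s0 = max (\<rho>/2) (\<rho> - e/4)"
    have s0: "s0 < \<rho>" "0 < s0" "\<rho> - s0 \<le> e/4" using rho_pos e by (auto simp: s0_def max_def)
    then have "compact (cball x s0)" using below[of s0] by (simp add: M_def)
    then obtain k where k: "finite k" "cball x s0 \<subseteq> (\<Union>c\<in>k. ball c (e/2))"
      using e unfolding compact_eq_totally_bounded by (meson half_gt_zero)
    have "cball x \<rho> \<subseteq> (\<Union>c\<in>k. ball c e)"
    proof
      fix y assume y: "y \<in> cball x \<rho>"
      show "y \<in> (\<Union>c\<in>k. ball c e)"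
      proof (cases "dist x y \<le> s0")
        case True
        then obtain c where c: "c \<in> k" "dist c y < e/2" using k(2) by fastforce
        then have "y \<in> ball c e" using e by simp
        then show ?thesis using c(1) by blast
      next
        case False
        obtain z where z: "dist x z \<le> s0" "dist z y \<le> dist x y - s0 + e/4"
          using approx_point[OF LS, of s0 x y "e/4"] s0 False e by auto
        obtain c where c: "c \<in> k" "dist c z < e/2" using k(2) z(1) by fastforce
        have "dist c y \<le> dist c z + dist z y" by (rule dist_triangle)
        also have "... < e"
        proof -
          have "dist x y \<le> \<rho>" using y by simp
          then show ?thesis using c(2) z(2) s0(3) by argo
        qed
        finally show ?thesis using c by auto
      qed
    qed
    then show "\<exists>k. finite k \<and> cball x \<rho> \<subseteq> (\<Union>c\<in>k. ball c e)" using k(1) by blast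
  qed
  have "\<forall>y::'a. \<exists>e. e > 0 \<and> compact (cball y e)"
  proof
    fix y :: 'a
    obtain e where "e > 0" "compact (cball y e)" using loc_compact_cball[OF LC, of y] by blast
    then show "\<exists>e. e > 0 \<and> compact (cball y e)" by blast
  qed
  then have "\<exists>r. \<forall>y::'a. r y > 0 \<and> compact (cball y (r y))" by (rule choice)
  then obtain r where r0: "\<forall>y::'a. r y > 0 \<and> compact (cball y (r y))" by blast
  have r: "\<And>y::'a. r y > 0 \<and> compact (cball y (r y))" using r0 by blast
  obtain C' where C': "C' \<subseteq> cball x \<rho>" "finite C'" "cball x \<rho> \<subseteq> (\<Union>c\<in>C'. ball c (r c / 2))"
  proof (rule compactE_image[OF comp_rho, of "cball x \<rho>" "\<lambda>c. ball c (r c / 2)"])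
    show "cball x \<rho> \<subseteq> (\<Union>c\<in>cball x \<rho>. ball c (r c / 2))"
    proof
      fix y assume "y \<in> cball x \<rho>"
      moreover have "y \<in> ball y (r y / 2)" using r[of y] by simp
      ultimately show "y \<in> (\<Union>c\<in>cball x \<rho>. ball c (r c / 2))" by blast
    qed
  qed auto
  have "x \<in> cball x \<rho>" using rho_pos by simp
  then have C'ne: "C' \<noteq> {}" using C'(3) by blast
  define \<eta> where "\<eta> = Min (r ` C') / 4"
  have eta_pos: "\<eta> > 0" using C' C'ne r by (simp add: \<eta>_def)
  have eta_le: "4 * \<eta> \<le> r c" if "c \<in> C'" for c
    using that C'(2) by (simp add: \<eta>_def)
  have sub: "cball x (\<rho> + \<eta>) \<subseteq> (\<Union>c\<in>C'. cball c (r c))"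
  proof
    fix z assume z: "z \<in> cball x (\<rho> + \<eta>)"
    show "z \<in> (\<Union>c\<in>C'. cball c (r c))"
    proof (cases "dist x z \<le> \<rho>")
      case True
      then obtain c where "c \<in> C'" "dist c z < r c / 2" using C'(3) by fastforce
      then show ?thesis using r[of c] by (auto intro!: bexI[of _ c])
    next
      case False
      obtain z' where z': "dist x z' \<le> \<rho>" "dist z' z \<le> dist x z - \<rho> + \<eta>"
        using approx_point[OF LS, of \<rho> x z \<eta>] False rho_pos eta_pos by auto
      obtain c where c: "c \<in> C'" "dist c z' < r c / 2" using C'(3) z'(1) by fastforce
      have "dist c z \<le> dist c z' + dist z' z" by (rule dist_triangle)
      also have "... \<le> r c"
      proof -
        have "dist x z \<le> \<rho> + \<eta>" using z by simp
        then show ?thesis using c(2) z'(2) eta_le[OF c(1)] by argo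
      qed
      finally show ?thesis using c by auto
    qed
  qed
  have "compact (\<Union>c\<in>C'. cball c (r c))" using C'(2) r by blast
  then have "compact (cball x (\<rho> + \<eta>))"
    using compact_Int_closed[of "\<Union>c\<in>C'. cball c (r c)" "cball x (\<rho> + \<eta>)"] sub
    by (simp add: Int_absorb1)
  then have "\<rho> + \<eta> \<in> M" by (simp add: M_def)
  then show False using rho_ge eta_pos by force
qed

lemma ccof_top_of_set:
  "connected_component_of (top_of_set S) x y \<longleftrightarrow> connected_component S x y"
  unfolding connected_component_of_def connected_component_def
  by (auto simp: connectedin_subtopology)

lemma components_top_of_set:
  "connected_components_of (top_of_set S) = components S"
proof -
  have "connected_component_of_set (top_of_set S) x = connected_component_set S x" for x
    using ccof_top_of_set by (auto simp: fun_eq_iff)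
  then show ?thesis
    unfolding connected_components_of_def components_def by auto
qed

lemma bb:
  fixes K A C :: "'a::metric_space set"
  assumes K: "compact K" "connected K" and A: "closed A" "A \<subseteq> K" "A \<noteq> K"
    and C: "C \<in> components A"
  shows "C \<inter> closure (K - A) \<noteq> {}"
proof -
  let ?X = "top_of_set K"
  have "connected_space ?X" using K(2) by (simp add: connected_space_subtopology)
  moreover have "compact_space ?X" using K(1) by (simp add: compact_space_subtopology)
  moreover have "Hausdorff_space ?X" by (simp add: Hausdorff_space_subtopology)
  moreover have "closedin ?X A" using A by (simp add: closed_subset)
  moreover have "A \<noteq> topspace ?X" using A by simp
  moreover have "C \<in> connected_components_of (subtopology ?X A)"
    using C A(2) by (simp add: subtopology_subtopology Int_absorb1 components_top_of_set)
  ultimately have "C \<inter> ?X frontier_of A \<noteq> {}"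
    by (rule boundary_bumping_theorem_closed)
  moreover have "?X frontier_of A \<subseteq> closure (K - A)"
  proof
    fix z assume "z \<in> ?X frontier_of A"
    then have z: "z \<in> K" "z \<notin> ?X interior_of A"
      by (auto simp: frontier_of_def closure_of_def)
    show "z \<in> closure (K - A)"
    proof (rule ccontr)
      assume "z \<notin> closure (K - A)"
      then obtain e where e: "e > 0" "ball z e \<inter> (K - A) = {}"
        by (metis closure_approachable disjoint_iff Int_iff mem_ball dist_commute)
      have "openin ?X (K \<inter> ball z e)" by (auto simp: openin_open_Int)
      moreover have "K \<inter> ball z e \<subseteq> A" using e by blast
      ultimately have "K \<inter> ball z e \<subseteq> ?X interior_of A" by (simp add: interior_of_maximal)
      then show False using z e by auto
    qed
  qed
  ultimately show ?thesis by blast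
qed

lemma comp_eq_ccs:
  assumes "W \<in> components S" "z \<in> W"
  shows "W = connected_component_set S z"
  using assms by (metis components_iff connected_component_eq)

lemma comp_sub:
  assumes "W \<in> components S" "z \<in> W" "connected T" "T \<subseteq> S" "z \<in> T"
  shows "T \<subseteq> W"
  using assms comp_eq_ccs connected_component_maximal by metis

lemma closure_comp:
  fixes c :: "'a::metric_space"
  assumes "Q \<in> components (cball c r - {c})"
  shows "closure Q \<subseteq> Q \<union> {c}"
proof -
  obtain T where T: "closed T" "Q = (cball c r - {c}) \<inter> T"
    using closedin_component[OF assms] by (auto simp: closedin_closed)
  have "closure Q \<subseteq> T \<inter> cball c r"
    using T by (intro closure_minimal) auto
  then show ?thesis using T by blast
qed

lemma reach_sphere:
  fixes x :: "'a::metric_space"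
  assumes LS: "length_space TYPE('a)" and CB: "\<And>(y::'a) t. compact (cball y t)"
    and W: "W \<in> components (cball x r - {x})" "z \<in> W" "s \<le> dist x z" "0 < s"
  shows "\<exists>p\<in>W. dist x p = s"
proof -
  define K where "K = cball x r"
  define A where "A = K - ball x s"
  have zK: "z \<in> K" using W(1,2) in_components_subset K_def by blast
  have r0: "0 \<le> r" using zK unfolding K_def by (metis mem_cball zero_le_dist order_trans)
  have xKA: "x \<in> K" "x \<notin> A" using r0 W(4) by (auto simp: K_def A_def)
  have A: "closed A" "A \<subseteq> K" "A \<noteq> K"
    by (auto simp: A_def K_def closed_Diff)[2] (use xKA in blast)
  have zA: "z \<in> A" using zK W(3) by (simp add: A_def)
  let ?P = "connected_component_set A z"
  have P: "?P \<in> components A" using zA by (simp add: componentsI)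
  obtain p where p: "p \<in> ?P" "p \<in> closure (K - A)"
    using bb[OF CB[of x r, folded K_def] cball_connected_ls[OF LS, of x r, folded K_def] A P] by blast
  have "closure (K - A) \<subseteq> cball x s"
    by (rule closure_minimal) (auto simp: A_def)
  moreover have "p \<in> A" using p(1) connected_component_subset by blast
  ultimately have dp: "dist x p = s" using p(2) by (auto simp: A_def)
  have "?P \<subseteq> A" by (rule connected_component_subset)
  then have "?P \<subseteq> cball x r - {x}" using W(4) by (auto simp: A_def K_def)
  then have "?P \<subseteq> W"
    using comp_sub[OF W(1,2)] zA by (simp add: connected_component_refl_eq)
  then show ?thesis using p(1) dp by blast
qed

lemma find_p:
  fixes x c :: "'a::metric_space"
  assumes LS: "length_space TYPE('a)" and CB: "\<And>(y::'a) t. compact (cball y t)"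
    and Q: "Q \<in> components (cball c r - {c})" "u \<in> Q" "dist c u = r"
    and x: "x \<notin> Q" "x \<noteq> c" "dist x c < \<rho>" "\<rho> < dist x u"
  shows "\<exists>p\<in>Q. dist x p = \<rho> \<and> p \<in> connected_component_set (cball x \<rho> - {x}) c"
proof -
  have uS: "u \<in> cball c r - {c}" using Q in_components_subset by blast
  then have rpos: "r > 0" using Q(3) by auto
  have cO: "c \<in> closure Q"
    unfolding closure_approachable
  proof (intro allI impI)
    fix e :: real assume e: "e > 0"
    obtain p where "p \<in> Q" "dist c p = min (e/2) r"
      using reach_sphere[OF LS CB Q(1,2), of "min (e/2) r"] Q(3) e rpos by auto
    then show "\<exists>y\<in>Q. dist y c < e" using e by (intro bexI[of _ p]) (auto simp: dist_commute)
  qed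
  define K where "K = closure Q"
  have Ksub: "K \<subseteq> Q \<union> {c}" using closure_comp[OF Q(1)] by (simp add: K_def)
  have "K \<subseteq> cball c r"
    unfolding K_def using in_components_subset[OF Q(1)] by (intro closure_minimal) auto
  then have Kc: "compact K"
    using compact_Int_closed[OF CB[of c r], of K] by (simp add: K_def Int_absorb1)
  have Kconn: "connected K"
    unfolding K_def using in_components_connected[OF Q(1)] by (rule connected_imp_connected_closure)
  define A where "A = K \<inter> cball x \<rho>"
  have uK: "u \<in> K" using Q(2) closure_subset K_def by blast
  have cK: "c \<in> K" using cO K_def by simp
  have "u \<notin> A" using x(4) by (auto simp: A_def)
  then have A: "closed A" "A \<subseteq> K" "A \<noteq> K"
    using uK by (auto simp: A_def K_def)
  have cA: "c \<in> A" using cK x(3) by (simp add: A_def dist_commute)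
  let ?P = "connected_component_set A c"
  have P: "?P \<in> components A" using cA by (simp add: componentsI)
  obtain p where p: "p \<in> ?P" "p \<in> closure (K - A)"
    using bb[OF Kc Kconn A P] by blast
  have "closure (K - A) \<subseteq> - ball x \<rho>"
    by (rule closure_minimal) (auto simp: A_def)
  moreover have pA: "p \<in> A" using p(1) connected_component_subset by blast
  ultimately have dp: "dist x p = \<rho>" using p(2) by (auto simp: A_def)
  have "p \<noteq> c" using dp x(3) by (auto simp: dist_commute)
  then have pO: "p \<in> Q" using pA Ksub A_def by blast
  have xK: "x \<notin> K" using Ksub x(1,2) by blast
  have "?P \<subseteq> cball x \<rho> - {x}"
    using connected_component_subset[of A c] xK by (auto simp: A_def)
  then have "?P \<subseteq> connected_component_set (cball x \<rho> - {x}) c"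
    by (intro connected_component_maximal) (auto simp: cA)
  then show ?thesis using pO dp p(1) by blast
qed

lemma cut_finite:
  fixes x :: "'a::metric_space"
  assumes LS: "length_space TYPE('a)" and CB: "\<And>(y::'a) t. compact (cball y t)"
    and cut: "cut_point r x" and r: "0 < r"
  shows "finite (components (cball x r - {x}))"
proof (rule ccontr)
  define Sr where "Sr = cball x r - {x}"
  define Cr where "Cr = components Sr"
  assume "infinite (components (cball x r - {x}))"
  then have inf: "infinite Cr" by (simp add: Cr_def Sr_def)
  have "\<forall>W\<in>Cr. \<exists>p. p \<in> W \<and> dist x p = r/2"
  proof
    fix W assume W: "W \<in> Cr"
    then obtain z where "z \<in> W" "dist x z = r"
      using cut unfolding cut_point_def Cr_def Sr_def by fastforce
    then show "\<exists>p. p \<in> W \<and> dist x p = r/2"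
      using reach_sphere[OF LS CB, of W x r z "r/2"] W r by (auto simp: Cr_def Sr_def)
  qed
  then obtain q where q: "\<forall>W\<in>Cr. q W \<in> W \<and> dist x (q W) = r/2" by (metis bchoice)
  have inj: "inj_on q Cr"
  proof (rule inj_onI)
    fix W W' assume "W \<in> Cr" "W' \<in> Cr" "q W = q W'"
    then show "W = W'" using q components_eq[of W Sr W'] by (auto simp: Cr_def)
  qed
  have infQ: "infinite (q ` Cr)" using inf inj finite_imageD by blast
  have "q ` Cr \<subseteq> cball x r" using q r by auto
  then obtain w where "w islimpt (q ` Cr)"
    using Heine_Borel_imp_Bolzano_Weierstrass[OF CB infQ] by blast
  then have I: "infinite (q ` Cr \<inter> ball w (r/8))" using r by (simp add: islimpt_eq_infinite_ball)
  then obtain a where a: "a \<in> q ` Cr \<inter> ball w (r/8)" by (metis finite.emptyI ex_in_conv)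
  have "infinite (q ` Cr \<inter> ball w (r/8) - {a})" using I by simp
  then obtain b where b: "b \<in> q ` Cr \<inter> ball w (r/8) - {a}" by (metis finite.emptyI ex_in_conv)
  obtain Wa Wb where Wab: "Wa \<in> Cr" "Wb \<in> Cr" "a = q Wa" "b = q Wb" using a b by blast
  have "Wa \<noteq> Wb" using Wab b by auto
  have dab: "dist a b < r/4"
  proof -
    have "dist a b \<le> dist a w + dist w b" by (rule dist_triangle)
    then show ?thesis using a b by (simp add: dist_commute)
  qed
  have "r/8 > 0" using r by simp
  then obtain T where T: "connected T" "a \<in> T" "b \<in> T" "\<forall>z\<in>T. dist a z + dist z b \<le> dist a b + r/8"
    using curve_set[OF LS] by blast
  have da: "dist x a = r/2" using q Wab by auto
  have "T \<subseteq> Sr"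
  proof
    fix z assume z: "z \<in> T"
    have "dist a z + dist z b \<le> dist a b + r/8" using T(4) z by blast
    then have "dist a z \<le> 3*r/8" using dab zero_le_dist[of z b] by argo
    moreover have "dist x z \<le> dist x a + dist a z" "dist x a \<le> dist x z + dist z a"
      by (rule dist_triangle)+
    ultimately have "dist x z \<le> r" "dist x z > 0" using da r dist_commute[of z a] by argo+
    then show "z \<in> Sr" by (auto simp: Sr_def)
  qed
  then have "T \<subseteq> Wa" using comp_sub[of Wa Sr a T] Wab q T by (auto simp: Cr_def)
  then have "b \<in> Wa \<inter> Wb" using T q Wab by auto
  then show False using components_eq[of Wa Sr Wb] Wab \<open>Wa \<noteq> Wb\<close> by (auto simp: Cr_def)
qed

lemma cut_smaller:
  fixes x :: "'a::metric_space"
  assumes LS: "length_space TYPE('a)" and CB: "\<And>(y::'a) t. compact (cball y t)"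
    and cut: "cut_point r x" and rho: "0 < \<rho>" "\<rho> \<le> r"
  shows "cut_point \<rho> x \<and>
    (\<forall>y\<in>cball x \<rho> - {x}. \<forall>z\<in>cball x \<rho> - {x}.
       connected_component (cball x r - {x}) y z \<longrightarrow> connected_component (cball x \<rho> - {x}) y z)"
proof -
  define Sr where "Sr = cball x r - {x}"
  define Cr where "Cr = components Sr"
  define Sp where "Sp = cball x \<rho> - {x}"
  define Cp where "Cp = components Sp"
  have r: "0 < r" using rho by simp
  have SpSr: "Sp \<subseteq> Sr" using rho by (auto simp: Sp_def Sr_def)
  have sph: "\<exists>p\<in>W. dist x p = \<rho>" if W: "W \<in> Cr" for W
  proof -
    obtain z where "z \<in> W" "dist x z = r"
      using cut W unfolding cut_point_def Cr_def Sr_def by fastforce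
    then show ?thesis
      using reach_sphere[OF LS CB, of W x r z \<rho>] W rho by (auto simp: Cr_def Sr_def)
  qed
  have finCr: "finite Cr" using cut_finite[OF LS CB cut r] by (simp add: Cr_def Sr_def)
  have degx: "deg x = enat (card Cr)"
    using cut finCr unfolding cut_point_def ncomp_def Cr_def Sr_def by simp
  have "ncomp Sp \<le> deg x"
    unfolding deg_def Sp_def
  proof (rule SUP_upper)
    show "cball x \<rho> \<in> {U. connected U \<and> (\<exists>V. open V \<and> x \<in> V \<and> V \<subseteq> U)}"
      using cball_connected_ls[OF LS] rho by (auto intro!: exI[of _ "ball x \<rho>"])
  qed
  then have finCp: "finite Cp" and cardle: "card Cp \<le> card Cr"
    using degx unfolding ncomp_def Cp_def by (auto split: if_splits)
  define h where "h V = connected_component_set Sr (SOME v. v \<in> V)" for V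
  have hV: "h V = connected_component_set Sr v" if V: "V \<in> Cp" "v \<in> V" for V v
  proof -
    have "V \<subseteq> Sp" using V in_components_subset by (auto simp: Cp_def)
    then have "V \<subseteq> connected_component_set Sr v"
      using V in_components_connected[of V Sp] SpSr
      by (intro connected_component_maximal) (auto simp: Cp_def)
    moreover have "(SOME v. v \<in> V) \<in> V" using V(2) by (rule someI)
    ultimately show ?thesis unfolding h_def by (meson connected_component_eq subsetD)
  qed
  have hC: "h V \<in> Cr" if V: "V \<in> Cp" for V
  proof -
    obtain v where v: "v \<in> V" using in_components_nonempty[of V Sp] V by (auto simp: Cp_def)
    then have "v \<in> Sr" using V in_components_subset SpSr by (fastforce simp: Cp_def)
    then show ?thesis using hV[OF V v] by (simp add: Cr_def componentsI)
  qed
  have surj: "\<exists>p. dist x p = \<rho> \<and> p \<in> W \<and> connected_component_set Sp p \<in> Cp \<and>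
                 h (connected_component_set Sp p) = W \<and> p \<in> connected_component_set Sp p"
    if W: "W \<in> Cr" for W
  proof -
    obtain p where p: "p \<in> W" "dist x p = \<rho>" using sph[OF W] by blast
    have "p \<in> Sr" using p W in_components_subset by (auto simp: Cr_def)
    then have pSp: "p \<in> Sp" using p by (auto simp: Sp_def Sr_def)
    have V: "connected_component_set Sp p \<in> Cp" using pSp by (simp add: Cp_def componentsI)
    have pV: "p \<in> connected_component_set Sp p" using pSp by simp
    have "h (connected_component_set Sp p) = connected_component_set Sr p" using hV[OF V pV] .
    also have "... = W" using comp_eq_ccs[of W Sr p] W p by (simp add: Cr_def)
    finally show ?thesis using p V pV by blast
  qed
  have img: "h ` Cp = Cr"
    using hC surj by blast
  have "card Cr \<le> card Cp" using img card_image_le[OF finCp, of h] by simp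
  then have cardeq: "card Cp = card Cr" using cardle by simp
  have inj: "inj_on h Cp"
    by (rule eq_card_imp_inj_on[OF finCp]) (simp add: img cardeq)
  have c2: "2 \<le> card Cr"
  proof (rule ccontr)
    assume "\<not> 2 \<le> card Cr"
    then have "card Cr = 0 \<or> card Cr = 1" by auto
    moreover have "card Cr \<noteq> 0"
    proof
      assume "card Cr = 0"
      then have "Sr = {}" using finCr by (simp add: Cr_def)
      then have "connected Sr" by simp
      then show False using cut by (simp add: cut_point_def Sr_def)
    qed
    moreover have "card Cr \<noteq> 1"
    proof
      assume "card Cr = 1"
      then obtain W where "Cr = {W}" by (rule card_1_singletonE)
      then have "Sr = W" "W \<in> Cr" using Union_components[of Sr] by (auto simp: Cr_def)
      then have "connected Sr" using in_components_connected by (auto simp: Cr_def)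
      then show False using cut by (simp add: cut_point_def Sr_def)
    qed
    ultimately show False by blast
  qed
  have i: "\<not> connected Sp"
  proof
    assume cSp: "connected Sp"
    have "card Cp \<le> 1"
    proof (cases "Sp = {}")
      case True then show ?thesis by (simp add: Cp_def)
    next
      case False
      then have "Cp = {Sp}" using cSp components_eq_sing_iff by (auto simp: Cp_def)
      then show ?thesis by simp
    qed
    then show False using c2 cardeq by simp
  qed
  have ii: "ncomp Sp = deg x" using degx cardeq finCp by (simp add: ncomp_def Cp_def)
  have iii: "V \<inter> sphere x \<rho> \<noteq> {}" if V: "V \<in> Cp" for V
  proof -
    obtain p where p: "dist x p = \<rho>" "connected_component_set Sp p \<in> Cp"
        "h (connected_component_set Sp p) = h V" "p \<in> connected_component_set Sp p"
      using surj[OF hC[OF V]] by blast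
    have "connected_component_set Sp p = V" using inj p(2,3) V by (simp add: inj_on_eq_iff)
    then show ?thesis using p by auto
  qed
  have cutp: "cut_point \<rho> x"
    unfolding cut_point_def using i ii iii by (simp add: Sp_def Cp_def)
  have trans: "connected_component Sp y z"
    if yz: "y \<in> Sp" "z \<in> Sp" "connected_component Sr y z" for y z
  proof -
    have Vy: "connected_component_set Sp y \<in> Cp" "y \<in> connected_component_set Sp y"
      using yz by (simp_all add: Cp_def componentsI)
    have Vz: "connected_component_set Sp z \<in> Cp" "z \<in> connected_component_set Sp z"
      using yz by (simp_all add: Cp_def componentsI)
    have "h (connected_component_set Sp y) = connected_component_set Sr y" using hV[OF Vy] .
    also have "... = connected_component_set Sr z"
      using yz(3) connected_component_eq[of z Sr y] by simp
    also have "... = h (connected_component_set Sp z)" using hV[OF Vz] by simp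
    finally have "connected_component_set Sp y = connected_component_set Sp z"
      using inj Vy Vz by (simp add: inj_on_eq_iff)
    then have "z \<in> connected_component_set Sp y" using Vz(2) by simp
    then show ?thesis by simp
  qed
  show ?thesis using cutp trans by (simp add: Sp_def Sr_def)
qed

theorem corollary4p14:
  fixes \<mu> :: "'a::metric_space measure"
    and k n C R \<delta> r :: real and x1 x2 x3 :: 'a and O1' :: "'a set"
  assumes "mms \<mu>" and "BG k n C \<mu>"
    and "n \<ge> 1" and "1 \<le> C" and "C < sqrt 2" and "R > 0"
    and "\<delta> > 0"
    and delta: "\<And>(x::'a) \<rho> W. 0 < \<rho> \<Longrightarrow> \<rho> \<le> R \<Longrightarrow> cut_point \<rho> x \<Longrightarrow>
                   W \<in> components (cball x \<rho> - {x}) \<Longrightarrow>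
                   diameter (W \<inter> sphere x \<rho>) \<le> (2 - \<delta>) * \<rho>"
    and "0 < r" and "r \<le> R"
    and "cut_point r x1" and "cut_point r x2" and "cut_point r x3"
    and "O1' \<in> components (cball x1 r - {x1})" and "x2 \<in> O1'" and "x3 \<in> O1'"
    and "dist x1 x2 < dist x1 x3"
    and "\<forall>a\<in>{x1,x2,x3}. \<forall>b\<in>{x1,x2,x3}. dist a b < \<delta> * r / 6"
  shows "\<forall>O2 O2' O3 O3'.
           O2 \<in> components (cball x2 r - {x2}) \<and> x1 \<in> O2 \<and>
           O2' \<in> components (cball x2 r - {x2}) \<and> O2' \<noteq> O2 \<and>
           O3 \<in> components (cball x3 r - {x3}) \<and> x1 \<in> O3 \<and>
           O3' \<in> components (cball x3 r - {x3}) \<and> O3' \<noteq> O3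
           \<longrightarrow> O2' \<inter> O3' \<noteq> {}"

proof (intro allI impI, elim conjE)
  fix O2 O2' O3 O3'
  assume O2: "O2 \<in> components (cball x2 r - {x2})" "x1 \<in> O2"
    and O2': "O2' \<in> components (cball x2 r - {x2})" "O2' \<noteq> O2"
    and O3: "O3 \<in> components (cball x3 r - {x3})" "x1 \<in> O3"
    and O3': "O3' \<in> components (cball x3 r - {x3})" "O3' \<noteq> O3"
  have CO: "complete (UNIV::'a set)" and LC: "locally compact (UNIV::'a set)"
    and LS: "length_space TYPE('a)"
    using assms(1) by (auto simp: mms_def)
  have CB: "\<And>(y::'a) t. compact (cball y t)" using compact_cball_ls[OF CO LC LS] .
  have r: "0 < r" "r \<le> R" by fact+
  have bO1: "bounded (O1' \<inter> sphere x1 r)" by (rule bounded_subset[OF bounded_cball[of x1 r]]) auto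
  have "0 \<le> diameter (O1' \<inter> sphere x1 r)" using diameter_ge_0[OF bO1] .
  also have "... \<le> (2 - \<delta>) * r" using delta[OF r assms(11) assms(14)] .
  finally have "0 \<le> (2 - \<delta>) * r" .
  then have d2: "\<delta> \<le> 2" using r by (simp add: zero_le_mult_iff)
  have d12: "dist x1 x2 < \<delta> * r / 6" and d13: "dist x1 x3 < \<delta> * r / 6"
    using assms(18) by auto
  have dr: "\<delta> * r \<le> 2 * r" using d2 r by simp
  define \<rho> where "\<rho> = r / 2"
  have rho: "0 < \<rho>" "\<rho> \<le> r" "\<rho> \<le> R" using r by (auto simp: \<rho>_def)
  have x2S: "x2 \<in> cball x1 r - {x1}" and x3S: "x3 \<in> cball x1 r - {x1}"
    using assms(14,15,16) in_components_subset by blast+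
  have x12: "x1 \<noteq> x2" "x1 \<noteq> x3" using x2S x3S by auto
  have x1O2': "x1 \<notin> O2'" using O2 O2' components_nonoverlap[of O2 _ O2'] by auto
  have x1O3': "x1 \<notin> O3'" using O3 O3' components_nonoverlap[of O3 _ O3'] by auto
  obtain u2 where u2: "u2 \<in> O2'" "dist x2 u2 = r"
    using assms(12) O2'(1) unfolding cut_point_def by fastforce
  obtain u3 where u3: "u3 \<in> O3'" "dist x3 u3 = r"
    using assms(13) O3'(1) unfolding cut_point_def by fastforce
  have "dist x2 u2 \<le> dist x2 x1 + dist x1 u2" by (rule dist_triangle)
  then have du2: "\<rho> < dist x1 u2" using u2(2) d12 dr r(1) dist_commute[of x2 x1] unfolding \<rho>_def by argo
  have "dist x3 u3 \<le> dist x3 x1 + dist x1 u3" by (rule dist_triangle)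
  then have du3: "\<rho> < dist x1 u3" using u3(2) d13 dr r(1) dist_commute[of x3 x1] unfolding \<rho>_def by argo
  have d12r: "dist x1 x2 < \<rho>" using d12 dr r(1) unfolding \<rho>_def by argo
  have d13r: "dist x1 x3 < \<rho>" using d13 dr r(1) unfolding \<rho>_def by argo
  obtain p where p: "p \<in> O2'" "dist x1 p = \<rho>" "p \<in> connected_component_set (cball x1 \<rho> - {x1}) x2"
    using find_p[OF LS CB O2'(1) u2 x1O2' x12(1) _ du2] d12r by (auto simp: dist_commute)
  obtain q where q: "q \<in> O3'" "dist x1 q = \<rho>" "q \<in> connected_component_set (cball x1 \<rho> - {x1}) x3"
    using find_p[OF LS CB O3'(1) u3 x1O3' x12(2) _ du3] d13r by (auto simp: dist_commute)
  have cs: "cut_point \<rho> x1 \<and>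
    (\<forall>y\<in>cball x1 \<rho> - {x1}. \<forall>z\<in>cball x1 \<rho> - {x1}.
       connected_component (cball x1 r - {x1}) y z \<longrightarrow> connected_component (cball x1 \<rho> - {x1}) y z)"
    using cut_smaller[OF LS CB assms(11) rho(1,2)] .
  have "O1' = connected_component_set (cball x1 r - {x1}) x2"
    using comp_eq_ccs[OF assms(14,15)] .
  then have "connected_component (cball x1 r - {x1}) x2 x3" using assms(16) by simp
  moreover have "x2 \<in> cball x1 \<rho> - {x1}" "x3 \<in> cball x1 \<rho> - {x1}"
    using d12r d13r x12 by auto
  ultimately have "connected_component (cball x1 \<rho> - {x1}) x2 x3" using cs by blast
  then have V23: "connected_component_set (cball x1 \<rho> - {x1}) x3 = connected_component_set (cball x1 \<rho> - {x1}) x2"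
    by (simp add: connected_component_eq)
  define V where "V = connected_component_set (cball x1 \<rho> - {x1}) x2"
  have V: "V \<in> components (cball x1 \<rho> - {x1})"
    using \<open>x2 \<in> cball x1 \<rho> - {x1}\<close> by (simp add: V_def componentsI)
  have pV: "p \<in> V \<inter> sphere x1 \<rho>" and qV: "q \<in> V \<inter> sphere x1 \<rho>"
    using p q V23 by (auto simp: V_def)
  have bV: "bounded (V \<inter> sphere x1 \<rho>)" by (rule bounded_subset[OF bounded_cball[of x1 \<rho>]]) auto
  have "dist p q \<le> diameter (V \<inter> sphere x1 \<rho>)" by (rule diameter_bounded_bound[OF bV pV qV])
  also have "... \<le> (2 - \<delta>) * \<rho>" using delta[OF rho(1,3) conjunct1[OF cs] V] .
  also have "... = r - \<delta> * r / 2" by (simp add: \<rho>_def field_simps)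
  finally have dpq: "dist p q \<le> r - \<delta> * r / 2" .
  define \<eta> where "\<eta> = (\<delta> * r / 2 - 2 * dist x1 x2) / 2"
  have eta: "\<eta> > 0" using d12 zero_le_dist[of x1 x2] unfolding \<eta>_def by argo
  obtain T where T: "connected T" "p \<in> T" "q \<in> T" "\<forall>z\<in>T. dist p z + dist z q \<le> dist p q + \<eta>"
    using curve_set[OF LS eta] by blast
  have tri: "dist x1 p \<le> dist x1 x2 + dist x2 p" "dist x2 p \<le> dist x1 x2 + dist x1 p"
    "dist x1 q \<le> dist x1 x2 + dist x2 q" "dist x2 q \<le> dist x1 x2 + dist x1 q"
    using dist_triangle[of x1 p x2] dist_triangle[of x2 p x1] dist_triangle[of x1 q x2] dist_triangle[of x2 q x1]
    by (simp_all add: dist_commute)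
  have "T \<subseteq> cball x2 r - {x2}"
  proof
    fix z assume z: "z \<in> T"
    have H: "dist p z + dist z q \<le> dist p q + \<eta>" using T(4) z by blast
    have t2: "dist x2 z \<le> dist x2 p + dist p z" "dist x2 z \<le> dist x2 q + dist q z"
      by (rule dist_triangle)+
    have "dist x2 z \<le> r"
      using H t2 tri p(2) q(2) dpq d12 dist_commute[of q z] unfolding \<eta>_def \<rho>_def by argo
    moreover have "z \<noteq> x2"
    proof
      assume "z = x2"
      then have "dist p x2 + dist x2 q \<le> dist p q + \<eta>" using H by simp
      then show False
        using tri p(2) q(2) dpq d12 dist_commute[of p x2] unfolding \<eta>_def \<rho>_def by argo
    qed
    ultimately show "z \<in> cball x2 r - {x2}" by simp
  qed
  then have "T \<subseteq> O2'" using comp_sub[OF O2'(1) p(1) T(1)] T(2) by blast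
  then have "q \<in> O2' \<inter> O3'" using T(3) q(1) by blast
  then show "O2' \<inter> O3' \<noteq> {}" by blast
qed

end
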